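(* Let $T$ be a tree of order at least $6$ in which the set $S'(T)$ of weak support vertices is a maximum $2$-packing. Then $T$ has no strong support vertex.
   Context: A leaf is a vertex of degree $1$; a weak support vertex is a vertex adjacent to exactly one leaf, and a strong support vertex is a vertex adjacent to at least two leaves. A $2$-packing is a set of vertices pairwise at distance at least $3$; a maximum $2$-packing is one of maximum cardinality. *)

theory Defs
  imports Main
begin

definition simple_graph :: "'a set \<Rightarrow> ('a \<Rightarrow> 'a \<Rightarrow> bool) \<Rightarrow> bool" where
  "simple_graph V E \<longleftrightarrow> finite V \<and> (\<forall>u v. E u v \<longrightarrow> u \<in> V \<and> v \<in> V)
     \<and> (\<forall>u v. E u v \<longrightarrow> E v u) \<and> (\<forall>v. \<not> E v v)"

definition neighbors :: "'a set \<Rightarrow> ('a \<Rightarrow> 'a \<Rightarrow> bool) \<Rightarrow> 'a \<Rightarrow> 'a set" where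
  "neighbors V E v = {u \<in> V. E v u}"

definition degree :: "'a set \<Rightarrow> ('a \<Rightarrow> 'a \<Rightarrow> bool) \<Rightarrow> 'a \<Rightarrow> nat" where
  "degree V E v = card (neighbors V E v)"

definition walk :: "'a set \<Rightarrow> ('a \<Rightarrow> 'a \<Rightarrow> bool) \<Rightarrow> 'a list \<Rightarrow> bool" where
  "walk V E xs \<longleftrightarrow> xs \<noteq> [] \<and> set xs \<subseteq> V \<and> (\<forall>i. Suc i < length xs \<longrightarrow> E (xs ! i) (xs ! Suc i))"

definition connected_graph :: "'a set \<Rightarrow> ('a \<Rightarrow> 'a \<Rightarrow> bool) \<Rightarrow> bool" where
  "connected_graph V E \<longleftrightarrow> (\<forall>u\<in>V. \<forall>v\<in>V. \<exists>xs. walk V E xs \<and> hd xs = u \<and> last xs = v)"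

definition is_cycle :: "'a set \<Rightarrow> ('a \<Rightarrow> 'a \<Rightarrow> bool) \<Rightarrow> 'a list \<Rightarrow> bool" where
  "is_cycle V E xs \<longleftrightarrow> walk V E xs \<and> length xs \<ge> 3 \<and> distinct xs \<and> E (last xs) (hd xs)"

definition tree :: "'a set \<Rightarrow> ('a \<Rightarrow> 'a \<Rightarrow> bool) \<Rightarrow> bool" where
  "tree V E \<longleftrightarrow> simple_graph V E \<and> V \<noteq> {} \<and> connected_graph V E \<and> (\<nexists>xs. is_cycle V E xs)"

definition dist :: "'a set \<Rightarrow> ('a \<Rightarrow> 'a \<Rightarrow> bool) \<Rightarrow> 'a \<Rightarrow> 'a \<Rightarrow> nat" where
  "dist V E u v = (LEAST n. \<exists>xs. walk V E xs \<and> hd xs = u \<and> last xs = v \<and> length xs = Suc n)"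

definition is_leaf :: "'a set \<Rightarrow> ('a \<Rightarrow> 'a \<Rightarrow> bool) \<Rightarrow> 'a \<Rightarrow> bool" where
  "is_leaf V E v \<longleftrightarrow> v \<in> V \<and> degree V E v = 1"

definition weak_support :: "'a set \<Rightarrow> ('a \<Rightarrow> 'a \<Rightarrow> bool) \<Rightarrow> 'a \<Rightarrow> bool" where
  "weak_support V E v \<longleftrightarrow> v \<in> V \<and> card {u \<in> neighbors V E v. is_leaf V E u} = 1"

definition strong_support :: "'a set \<Rightarrow> ('a \<Rightarrow> 'a \<Rightarrow> bool) \<Rightarrow> 'a \<Rightarrow> bool" where
  "strong_support V E v \<longleftrightarrow> v \<in> V \<and> card {u \<in> neighbors V E v. is_leaf V E u} \<ge> 2"

definition weak_supports :: "'a set \<Rightarrow> ('a \<Rightarrow> 'a \<Rightarrow> bool) \<Rightarrow> 'a set" where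
  "weak_supports V E = {v \<in> V. weak_support V E v}"

definition two_packing :: "'a set \<Rightarrow> ('a \<Rightarrow> 'a \<Rightarrow> bool) \<Rightarrow> 'a set \<Rightarrow> bool" where
  "two_packing V E S \<longleftrightarrow> S \<subseteq> V \<and> (\<forall>u\<in>S. \<forall>v\<in>S. u \<noteq> v \<longrightarrow> dist V E u v \<ge> 3)"

definition max_two_packing :: "'a set \<Rightarrow> ('a \<Rightarrow> 'a \<Rightarrow> bool) \<Rightarrow> 'a set \<Rightarrow> bool" where
  "max_two_packing V E S \<longleftrightarrow> two_packing V E S \<and> (\<forall>S'. two_packing V E S' \<longrightarrow> card S' \<le> card S)"

end

theory Submission
  imports Defs
begin

definition close :: "('a \<Rightarrow> 'a \<Rightarrow> bool) \<Rightarrow> 'a \<Rightarrow> 'a \<Rightarrow> bool" where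
  "close E x y \<longleftrightarrow> x = y \<or> E x y \<or> (\<exists>z. E x z \<and> E z y)"

lemma short_walk:
  assumes "walk V E xs" "length xs \<le> 3"
  shows "close E (hd xs) (last xs)"
proof -
  have ne: "xs \<noteq> []" using assms by (simp add: walk_def)
  have st: "\<And>i. Suc i < length xs \<Longrightarrow> E (xs ! i) (xs ! Suc i)" using assms by (simp add: walk_def)
  show ?thesis
  proof (cases xs)
    case Nil then show ?thesis using ne by simp
  next
    case (Cons x ys)
    show ?thesis
    proof (cases ys)
      case Nil then show ?thesis using Cons by (simp add: close_def)
    next
      case (Cons y zs)
      note c1 = \<open>xs = x # ys\<close>
      show ?thesis
      proof (cases zs)
        case Nil
        have "E x y" using st[of 0] c1 Cons Nil by simp
        then show ?thesis using c1 Cons Nil by (simp add: close_def)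
      next
        case (Cons z ws)
        have ws: "ws = []" using assms(2) c1 \<open>ys = y # zs\<close> Cons by simp
        have "E x y" using st[of 0] c1 \<open>ys = y # zs\<close> Cons by simp
        moreover have "E y z" using st[of 1] c1 \<open>ys = y # zs\<close> Cons by simp
        ultimately show ?thesis using c1 \<open>ys = y # zs\<close> Cons ws by (auto simp: close_def)
      qed
    qed
  qed
qed

lemma dist_small_close:
  assumes "connected_graph V E" "x \<in> V" "y \<in> V" "dist V E x y < 3"
  shows "close E x y"
proof -
  let ?P = "\<lambda>n. \<exists>xs. walk V E xs \<and> hd xs = x \<and> last xs = y \<and> length xs = Suc n"
  obtain xs where "walk V E xs" "hd xs = x" "last xs = y"
    using assms unfolding connected_graph_def by blast
  then have "?P (length xs - 1)" by (auto simp: walk_def)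
  then have "?P (Least ?P)" by (rule LeastI)
  then obtain ys where "walk V E ys" "hd ys = x" "last ys = y" "length ys = Suc (dist V E x y)"
    unfolding dist_def by blast
  then show ?thesis using short_walk[of V E ys] assms(4) by auto
qed

lemma close_dist_small:
  assumes "simple_graph V E" "close E x y" "x \<in> V" "y \<in> V"
  shows "dist V E x y < 3"
proof -
  let ?P = "\<lambda>n. \<exists>xs. walk V E xs \<and> hd xs = x \<and> last xs = y \<and> length xs = Suc n"
  have "\<exists>n<3. ?P n"
  proof -
    consider "x = y" | "E x y" | z where "E x z" "E z y" using assms(2) unfolding close_def by blast
    then show ?thesis
    proof cases
      case 1
      then have "?P 0" using assms by (intro exI[of _ "[x]"]) (auto simp: walk_def)
      then show ?thesis by (intro exI[of _ 0]) simp
    next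
      case 2
      then have "?P 1" using assms
        by (intro exI[of _ "[x,y]"]) (auto simp: walk_def less_Suc_eq)
      then show ?thesis by (intro exI[of _ 1]) simp
    next
      case 3
      then have "z \<in> V" using assms(1) unfolding simple_graph_def by blast
      with 3 have "?P 2" using assms
        by (intro exI[of _ "[x,z,y]"]) (auto simp: walk_def less_Suc_eq nth_Cons split: nat.splits)
      then show ?thesis by (intro exI[of _ 2]) simp
    qed
  qed
  then obtain n where "n < 3" "?P n" by blast
  then have "Least ?P \<le> n" by (intro Least_le)
  then show ?thesis unfolding dist_def using \<open>n<3\<close> by linarith
qed

lemma leaf_nb:
  assumes "simple_graph V E" "is_leaf V E x" "E x y" "E x z"
  shows "y = z"
proof -
  have "card (neighbors V E x) = 1" using assms(2) by (simp add: is_leaf_def degree_def)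
  then obtain w where w: "neighbors V E x = {w}" by (rule card_1_singletonE)
  have "y \<in> neighbors V E x" "z \<in> neighbors V E x"
    using assms unfolding neighbors_def simple_graph_def by auto
  then show ?thesis using w by auto
qed

theorem claim1:
  fixes V :: "'a set" and E :: "'a \<Rightarrow> 'a \<Rightarrow> bool"
  assumes "tree V E"
    and "card V \<ge> 6"
    and "max_two_packing V E (weak_supports V E)"
  shows "\<not> (\<exists>v\<in>V. strong_support V E v)"
proof
  assume "\<exists>v\<in>V. strong_support V E v"
  then obtain v where vV: "v \<in> V" and sv: "strong_support V E v" by blast
  have sg: "simple_graph V E" and con: "connected_graph V E" using assms(1) by (auto simp: tree_def)
  have fin: "finite V" and inV: "\<And>u w. E u w \<Longrightarrow> u \<in> V \<and> w \<in> V"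
    and sym: "\<And>u w. E u w \<Longrightarrow> E w u" and irr: "\<And>u. \<not> E u u"
    using sg unfolding simple_graph_def by auto
  have close_sym: "\<And>x y. close E x y \<Longrightarrow> close E y x" unfolding close_def using sym by blast
  define S where "S = weak_supports V E"
  have SV: "S \<subseteq> V" and finS: "finite S" using fin by (auto simp: S_def weak_supports_def intro: finite_subset)
  have pack: "\<And>x y. x \<in> S \<Longrightarrow> y \<in> S \<Longrightarrow> x \<noteq> y \<Longrightarrow> \<not> close E x y"
  proof -
    fix x y assume "x \<in> S" "y \<in> S" "x \<noteq> y"
    then have "dist V E x y \<ge> 3" using assms(3) unfolding max_two_packing_def two_packing_def S_def by blast
    then show "\<not> close E x y" using close_dist_small[OF sg, of x y] SV \<open>x \<in> S\<close> \<open>y \<in> S\<close> by force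
  qed
  have maxS: "\<And>S'. two_packing V E S' \<Longrightarrow> card S' \<le> card S"
    using assms(3) unfolding max_two_packing_def S_def by blast
  have mk: "two_packing V E T" if "T \<subseteq> V" "\<And>x y. x \<in> T \<Longrightarrow> y \<in> T \<Longrightarrow> x \<noteq> y \<Longrightarrow> \<not> close E x y" for T
    unfolding two_packing_def using that dist_small_close[OF con] by (meson not_le subsetD)
  have inS: "\<And>x. x \<in> S \<longleftrightarrow> weak_support V E x" by (auto simp: S_def weak_supports_def weak_support_def)
  define L where "L = {u \<in> neighbors V E v. is_leaf V E u}"
  have cL: "card L \<ge> 2" using sv by (simp add: strong_support_def L_def)
  have finN: "finite (neighbors V E v)" using fin by (simp add: neighbors_def)
  have "card L \<le> card (neighbors V E v)" using finN by (auto simp: L_def intro: card_mono)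
  then have "degree V E v \<ge> 2" using cL by (simp add: degree_def)
  then have vnl: "\<not> is_leaf V E v" by (simp add: is_leaf_def)
  have vnw: "\<not> weak_support V E v" using cL by (simp add: weak_support_def L_def)
  have "L \<noteq> {}" using cL by auto
  then obtain a where "a \<in> L" by blast
  then have aleaf: "is_leaf V E a" and Eva: "E v a" by (auto simp: L_def neighbors_def)
  have Eav: "E a v" using sym Eva by blast
  have anb: "\<And>x. E a x \<Longrightarrow> x = v" using leaf_nb[OF sg aleaf] Eav by blast
  have aV: "a \<in> V" using inV Eva by blast
  have anw: "\<not> weak_support V E a"
  proof -
    have "{u \<in> neighbors V E a. is_leaf V E u} = {}"
      using anb vnl by (auto simp: neighbors_def)
    then have "card {u \<in> neighbors V E a. is_leaf V E u} = 0" by (simp only: card.empty)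
    then show ?thesis by (simp add: weak_support_def)
  qed
  show False
  proof (cases "\<exists>w. E v w \<and> weak_support V E w")
    case False
    let ?T = "insert a S"
    have "two_packing V E ?T"
    proof (rule mk)
      show "?T \<subseteq> V" using SV aV by auto
      have ca: "\<not> close E a u" if "u \<in> S" for u
      proof
        assume "close E a u"
        moreover have "u \<noteq> a" using that anw inS by blast
        moreover have "\<not> E a u" using anb that inS vnw by blast
        moreover have "\<not> (\<exists>z. E a z \<and> E z u)" using anb that inS False by blast
        ultimately show False unfolding close_def by blast
      qed
      fix x y assume "x \<in> ?T" "y \<in> ?T" "x \<noteq> y"
      then show "\<not> close E x y" using ca pack close_sym by blast
    qed
    then have "card ?T \<le> card S" by (rule maxS)
    moreover have "a \<notin> S" using anw inS by blast
    ultimately show False using finS by simp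
  next
    case True
    then obtain w where Evw: "E v w" and ww: "weak_support V E w" by blast
    have Ewv: "E w v" using sym Evw by blast
    have "card {u \<in> neighbors V E w. is_leaf V E u} = 1" using ww by (simp add: weak_support_def)
    then obtain c where "{u \<in> neighbors V E w. is_leaf V E u} = {c}" by (rule card_1_singletonE)
    then have cleaf: "is_leaf V E c" and Ewc: "E w c" by (auto simp: neighbors_def)
    have Ecw: "E c w" using sym Ewc by blast
    have cnb: "\<And>x. E c x \<Longrightarrow> x = w" using leaf_nb[OF sg cleaf] Ecw by blast
    have cV: "c \<in> V" using inV Ewc by blast
    have vc: "v \<noteq> c" using vnl cleaf by blast
    have wnl: "\<not> is_leaf V E w" using leaf_nb[OF sg _ Ewv Ewc] vc by blast
    have cnw: "\<not> weak_support V E c"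
    proof -
      have "{u \<in> neighbors V E c. is_leaf V E u} = {}"
        using cnb wnl by (auto simp: neighbors_def)
      then have "card {u \<in> neighbors V E c. is_leaf V E u} = 0" by (simp only: card.empty)
      then show ?thesis by (simp add: weak_support_def)
    qed
    have vw: "v \<noteq> w" using Evw irr by blast
    have wS: "w \<in> S" using ww inS by blast
    let ?T = "insert a (insert c (S - {w}))"
    have "two_packing V E ?T"
    proof (rule mk)
      show "?T \<subseteq> V" using SV aV cV by auto
      have ac: "\<not> close E a c"
      proof
        assume "close E a c"
        moreover have "a \<noteq> c" using anb cnb Eav Ecw vw Evw
          by (metis Eav cnb vw)
        moreover have "\<not> E a c" using anb vc by blast
        moreover have "\<not> (\<exists>z. E a z \<and> E z c)" using anb cnb sym vw by blast
        ultimately show False unfolding close_def by blast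
      qed
      have ca: "\<not> close E a u" if "u \<in> S - {w}" for u
      proof
        assume "close E a u"
        moreover have "u \<noteq> a" using that anw inS by blast
        moreover have "\<not> E a u" using anb that inS vnw by blast
        moreover have "\<not> (\<exists>z. E a z \<and> E z u)"
        proof
          assume "\<exists>z. E a z \<and> E z u"
          then have "E v u" using anb by blast
          then have "close E u w" using sym Evw unfolding close_def by blast
          then show False using pack[of u w] that wS by blast
        qed
        ultimately show False unfolding close_def by blast
      qed
      have cc: "\<not> close E c u" if "u \<in> S - {w}" for u
      proof
        assume "close E c u"
        moreover have "u \<noteq> c" using that cnw inS by blast
        moreover have "\<not> E c u" using cnb that by blast
        moreover have "\<not> (\<exists>z. E c z \<and> E z u)"
        proof
          assume "\<exists>z. E c z \<and> E z u"
          then have "E w u" using cnb by blast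
          then have "close E u w" using sym unfolding close_def by blast
          then show False using pack[of u w] that wS by blast
        qed
        ultimately show False unfolding close_def by blast
      qed
      fix x y assume "x \<in> ?T" "y \<in> ?T" "x \<noteq> y"
      then show "\<not> close E x y" using ca cc ac pack close_sym by blast
    qed
    then have "card ?T \<le> card S" by (rule maxS)
    moreover have "a \<notin> S" using anw inS by blast
    moreover have "c \<notin> S" using cnw inS by blast
    moreover have "a \<noteq> c" using anb cnb Eav Ecw vw by metis
    moreover have "card (S - {w}) = card S - 1" using wS finS by simp
    moreover have "card S \<ge> 1" using wS finS by (metis One_nat_def Suc_leI card_gt_0_iff empty_iff)
    ultimately show False using finS by simp
  qed
qed

end
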